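(* Let $G^{Init}$ be a gene tree for a gene set $\Gamma$, let $\mathcal G=\{G_1,\dots,G_k\}$ be a set of separated subtrees of $G^{Init}$ with $\bigcup_i\mathcal L(G_i)=\Gamma$, and let $G^{TR}$ be a tree for $\Gamma$ that displays every $G_i$ and is triplet respecting. Then for every node $x$ of $G^{Init}$ with $|\mathcal G(x)|\ge 2$, there exists a node $y$ of $G^{TR}$ such that $\mathcal L(y)=\mathcal L(x)$.
   Context: All trees are rooted and binary; $\mathcal L(x)$ denotes the set of leaves below node $x$ and $T[x]$ the subtree rooted at $x$. For $L'\subseteq\mathcal L(T)$, $T|_{L'}$ is obtained from the subtree rooted at $lca_T(L')$ by removing leaves not in $L'$ and suppressing internal degree-2 nodes other than the root; $T$ displays $T'$ if $T|_{\mathcal L(T')}$ is isomorphic to $T'$ preserving leaf labels. $\mathcal G$ is a set of separated subtrees of $G^{Init}$ if $G_i=G^{Init}[v_i]$ for pairwise separated nodes $v_i$ (none an ancestor of another). For a node $x$ of $G^{Init}$, $\mathcal G(x)$ is the set of trees of $\mathcal G$ that are subtrees of $G^{Init}[x]$. A tree $G^{TR}$ for $\Gamma$ displaying every $G_i$ is triplet respecting if for any three distinct trees $G_{i_1},G_{i_2},G_{i_3}\in\mathcal G$ and genes $a\in\mathcal L(G_{i_1})$, $b\in\mathcal L(G_{i_2})$, $c\in\mathcal L(G_{i_3})$, $G^{Init}|_{\{a,b,c\}}=G^{TR}|_{\{a,b,c\}}$. *)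

theory Defs
  imports Main
begin

text \<open>Rooted binary trees with leaves labelled by genes. Nodes of a tree are identified
with the subtrees rooted at them (leaf labels are required to be distinct, so each
subtree occurs exactly once).\<close>

datatype 'a tree = Leaf 'a | Node "'a tree" "'a tree"

fun leaf_list :: "'a tree \<Rightarrow> 'a list" where
  "leaf_list (Leaf a) = [a]"
| "leaf_list (Node l r) = leaf_list l @ leaf_list r"

definition leaves :: "'a tree \<Rightarrow> 'a set" where
  "leaves T = set (leaf_list T)"

fun subtrees :: "'a tree \<Rightarrow> 'a tree set" where
  "subtrees (Leaf a) = {Leaf a}"
| "subtrees (Node l r) = insert (Node l r) (subtrees l \<union> subtrees r)"

definition tree_for :: "'a tree \<Rightarrow> 'a set \<Rightarrow> bool" where
  "tree_for T Gamma \<longleftrightarrow> distinct (leaf_list T) \<and> leaves T = Gamma"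

text \<open>Restriction T|_L: keep leaves in L, suppress degree-2 nodes, root at lca.
  None if no leaf of T is in L.\<close>
fun restrict :: "'a tree \<Rightarrow> 'a set \<Rightarrow> 'a tree option" where
  "restrict (Leaf a) L = (if a \<in> L then Some (Leaf a) else None)"
| "restrict (Node l r) L =
     (case (restrict l L, restrict r L) of
        (None, t) \<Rightarrow> t
      | (t, None) \<Rightarrow> t
      | (Some a, Some b) \<Rightarrow> Some (Node a b))"

fun tree_iso :: "'a tree \<Rightarrow> 'a tree \<Rightarrow> bool" where
  "tree_iso (Leaf a) (Leaf b) = (a = b)"
| "tree_iso (Node a b) (Node c d) =
     ((tree_iso a c \<and> tree_iso b d) \<or> (tree_iso a d \<and> tree_iso b c))"
| "tree_iso _ _ = False"

definition displays :: "'a tree \<Rightarrow> 'a tree \<Rightarrow> bool" where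
  "displays T T' \<longleftrightarrow> (\<exists>t. restrict T (leaves T') = Some t \<and> tree_iso t T')"

definition separated_subtrees :: "'a tree set \<Rightarrow> 'a tree \<Rightarrow> bool" where
  "separated_subtrees GS G \<longleftrightarrow> GS \<subseteq> subtrees G \<and>
     (\<forall>g1\<in>GS. \<forall>g2\<in>GS. g1 \<noteq> g2 \<longrightarrow> g2 \<notin> subtrees g1)"

definition GS_at :: "'a tree set \<Rightarrow> 'a tree \<Rightarrow> 'a tree set" where
  "GS_at GS x = {g \<in> GS. g \<in> subtrees x}"

definition triplet_respecting :: "'a tree \<Rightarrow> 'a tree set \<Rightarrow> 'a tree \<Rightarrow> bool" where
  "triplet_respecting GInit GS GTR \<longleftrightarrow>
     (\<forall>g1\<in>GS. \<forall>g2\<in>GS. \<forall>g3\<in>GS. g1 \<noteq> g2 \<and> g1 \<noteq> g3 \<and> g2 \<noteq> g3 \<longrightarrow>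
       (\<forall>a\<in>leaves g1. \<forall>b\<in>leaves g2. \<forall>c\<in>leaves g3.
          (\<exists>t1 t2. restrict GInit {a,b,c} = Some t1 \<and> restrict GTR {a,b,c} = Some t2
                  \<and> tree_iso t1 t2)))"

end

theory Submission
  imports Defs
begin

lemma leaves_simps[simp]: "leaves (Leaf a) = {a}" "leaves (Node l r) = leaves l \<union> leaves r"
  by (simp_all add: leaves_def)

lemma subtrees_refl[simp]: "t \<in> subtrees t"
  by (cases t) auto

lemma subtrees_trans: "s \<in> subtrees t \<Longrightarrow> u \<in> subtrees s \<Longrightarrow> u \<in> subtrees t"
  by (induction t) auto

lemma subtrees_leaves: "s \<in> subtrees t \<Longrightarrow> leaves s \<subseteq> leaves t"
  by (induction t) auto

lemma leaves_nonempty: "leaves t \<noteq> {}"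
  by (induction t) auto

lemma comparable:
  "distinct (leaf_list t) \<Longrightarrow> s1 \<in> subtrees t \<Longrightarrow> s2 \<in> subtrees t
   \<Longrightarrow> leaves s1 \<inter> leaves s2 \<noteq> {} \<Longrightarrow> s1 \<in> subtrees s2 \<or> s2 \<in> subtrees s1"
proof (induction t)
  case (Leaf x)
  then show ?case by auto
next
  case (Node l r)
  have disj: "leaves l \<inter> leaves r = {}" using Node.prems(1) by (auto simp: leaves_def)
  show ?case
  proof (cases "s1 = Node l r \<or> s2 = Node l r")
    case True then show ?thesis using Node.prems by auto
  next
    case False
    then have s1: "s1 \<in> subtrees l \<or> s1 \<in> subtrees r" and s2: "s2 \<in> subtrees l \<or> s2 \<in> subtrees r"
      using Node.prems by auto
    show ?thesis
    proof -
      { assume "s1 \<in> subtrees l" "s2 \<in> subtrees r"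
        then have False using disj Node.prems(4) subtrees_leaves by blast }
      moreover
      { assume "s2 \<in> subtrees l" "s1 \<in> subtrees r"
        then have False using disj Node.prems(4) subtrees_leaves by blast }
      ultimately show ?thesis using s1 s2 Node by auto
    qed
  qed
qed

lemma restrict_leaves_gen:
  "(case restrict T L of None \<Rightarrow> leaves T \<inter> L = {} | Some t \<Rightarrow> leaves t = leaves T \<inter> L)"
proof (induction T)
  case (Leaf x)
  then show ?case by auto
next
  case (Node l r)
  then show ?case by (auto split: option.splits)
qed

lemma restrict_leaves: "restrict T L = Some t \<Longrightarrow> leaves t = leaves T \<inter> L"
  using restrict_leaves_gen[of T L] by auto

lemma restrict_None: "restrict T L = None \<Longrightarrow> leaves T \<inter> L = {}"
  using restrict_leaves_gen[of T L] by auto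

lemma restrict_sub:
  "s \<in> subtrees T \<Longrightarrow> leaves s \<inter> L \<noteq> {} \<Longrightarrow> restrict T L = Some t
   \<Longrightarrow> \<exists>s'\<in>subtrees t. leaves s' = leaves s \<inter> L"
proof (induction T arbitrary: t)
  case (Leaf x)
  then show ?case by (auto split: if_splits)
next
  case (Node l r)
  show ?case
  proof (cases "s = Node l r")
    case True
    then show ?thesis using Node.prems restrict_leaves[OF Node.prems(3)] by auto
  next
    case False
    then have "s \<in> subtrees l \<or> s \<in> subtrees r" using Node.prems by auto
    then show ?thesis
    proof
      assume sl: "s \<in> subtrees l"
      then have "leaves l \<inter> L \<noteq> {}" using Node.prems(2) subtrees_leaves by blast
      then obtain tl where tl: "restrict l L = Some tl" using restrict_None by fastforce
      then obtain s' where "s' \<in> subtrees tl" "leaves s' = leaves s \<inter> L"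
        using Node.IH(1)[OF sl Node.prems(2)] by blast
      moreover have "tl \<in> subtrees t" using Node.prems(3) tl by (auto split: option.splits)
      ultimately show ?thesis using subtrees_trans by blast
    next
      assume sr: "s \<in> subtrees r"
      then have "leaves r \<inter> L \<noteq> {}" using Node.prems(2) subtrees_leaves by blast
      then obtain tr where tr: "restrict r L = Some tr" using restrict_None by fastforce
      then obtain s' where "s' \<in> subtrees tr" "leaves s' = leaves s \<inter> L"
        using Node.IH(2)[OF sr Node.prems(2)] by blast
      moreover have "tr \<in> subtrees t" using Node.prems(3) tr by (auto split: option.splits)
      ultimately show ?thesis using subtrees_trans by blast
    qed
  qed
qed

lemma restrict_sub':
  "restrict T L = Some t \<Longrightarrow> s' \<in> subtrees t \<Longrightarrow> \<exists>s\<in>subtrees T. leaves s' = leaves s \<inter> L"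
proof (induction T arbitrary: t)
  case (Leaf x)
  then show ?case by (auto split: if_splits)
next
  case (Node l r)
  show ?case
  proof (cases "restrict l L")
    case None
    then show ?thesis using Node by (cases "restrict r L") fastforce+
  next
    case (Some tl)
    show ?thesis
    proof (cases "restrict r L")
      case None
      then show ?thesis using Node Some by fastforce
    next
      case (Some tr)
      with \<open>restrict l L = Some tl\<close> Node.prems have t: "t = Node tl tr" by auto
      show ?thesis
      proof (cases "s' = t")
        case True
        then show ?thesis using restrict_leaves[OF Node.prems(1)] by (intro bexI[of _ "Node l r"]) auto
      next
        case False
        then have "s' \<in> subtrees tl \<or> s' \<in> subtrees tr" using t Node.prems by auto
        then show ?thesis using Node.IH \<open>restrict l L = Some tl\<close> Some by fastforce
      qed
    qed
  qed
qed

lemma iso_leaves: "tree_iso t1 t2 \<Longrightarrow> leaves t1 = leaves t2"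
  by (induction t1 t2 rule: tree_iso.induct) auto

lemma iso_sub: "tree_iso t1 t2 \<Longrightarrow> s1 \<in> subtrees t1 \<Longrightarrow> \<exists>s2\<in>subtrees t2. leaves s2 = leaves s1"
proof (induction t1 t2 arbitrary: s1 rule: tree_iso.induct)
  case (2 a b c d)
  show ?case
  proof (cases "s1 = Node a b")
    case True
    then show ?thesis using 2(5) iso_leaves by (intro bexI[of _ "Node c d"]) auto
  next
    case False
    then have s1: "s1 \<in> subtrees a \<or> s1 \<in> subtrees b" using 2(6) by auto
    have sub: "subtrees c \<subseteq> subtrees (Node c d)" "subtrees d \<subseteq> subtrees (Node c d)" by auto
    from 2(5) have "(tree_iso a c \<and> tree_iso b d) \<or> (tree_iso a d \<and> tree_iso b c)" by simp
    then show ?thesis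
    proof
      assume h: "tree_iso a c \<and> tree_iso b d"
      from s1 show ?thesis
      proof
        assume "s1 \<in> subtrees a" then show ?thesis using 2(1) h sub by blast
      next
        assume "s1 \<in> subtrees b" then show ?thesis using 2(2) h sub by blast
      qed
    next
      assume h: "tree_iso a d \<and> tree_iso b c"
      from s1 show ?thesis
      proof
        assume "s1 \<in> subtrees a" then show ?thesis using 2(3) h sub by blast
      next
        assume "s1 \<in> subtrees b" then show ?thesis using 2(4) h sub by blast
      qed
    qed
  qed
qed auto

lemma lca_exists:
  "A \<subseteq> leaves T \<Longrightarrow> \<exists>y\<in>subtrees T. A \<subseteq> leaves y \<and>
     (\<forall>y1 y2. y = Node y1 y2 \<longrightarrow> \<not> A \<subseteq> leaves y1 \<and> \<not> A \<subseteq> leaves y2)"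
proof (induction T)
  case (Leaf x)
  then show ?case by auto
next
  case (Node l r)
  then show ?case by (cases "A \<subseteq> leaves l"; cases "A \<subseteq> leaves r") auto
qed

lemma triplet_contra:
  assumes "distinct (leaf_list T2)"
    and "restrict T1 {a,b,c} = Some t1" "restrict T2 {a,b,c} = Some t2" "tree_iso t1 t2"
    and "s1 \<in> subtrees T1" "a \<in> leaves s1" "b \<in> leaves s1" "c \<notin> leaves s1"
    and "s2 \<in> subtrees T2" "a \<in> leaves s2" "c \<in> leaves s2" "b \<notin> leaves s2"
  shows False
proof -
  obtain s' where s': "s' \<in> subtrees t1" "leaves s' = leaves s1 \<inter> {a,b,c}"
    using restrict_sub[OF assms(5) _ assms(2)] assms(6) by blast
  obtain s'' where s'': "s'' \<in> subtrees t2" "leaves s'' = leaves s'"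
    using iso_sub[OF assms(4) s'(1)] by blast
  obtain s where s: "s \<in> subtrees T2" "leaves s'' = leaves s \<inter> {a,b,c}"
    using restrict_sub'[OF assms(3) s''(1)] by blast
  have "a \<in> leaves s" "b \<in> leaves s" "c \<notin> leaves s"
    using s s'' s' assms(6-8) by blast+
  then have "s \<in> subtrees s2 \<or> s2 \<in> subtrees s"
    using comparable[OF assms(1) s(1) assms(9)] assms(10) by blast
  then show False using subtrees_leaves assms(11,12) \<open>b \<in> leaves s\<close> \<open>c \<notin> leaves s\<close> by blast
qed

lemma card2_obtain:
  assumes "card S \<ge> 2" obtains h1 h2 where "h1 \<in> S" "h2 \<in> S" "h1 \<noteq> h2"
proof -
  have "Suc (Suc 0) \<le> card S" using assms by simp
  then show ?thesis using that by (auto simp: card_le_Suc_iff)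
qed

theorem lemma6:
  fixes GInit GTR :: "'a tree" and Gamma :: "'a set" and GS :: "'a tree set"
  assumes "tree_for GInit Gamma"
    and "separated_subtrees GS GInit"
    and "\<Union> (leaves ` GS) = Gamma"
    and "tree_for GTR Gamma"
    and "\<forall>g\<in>GS. displays GTR g"
    and "triplet_respecting GInit GS GTR"
    and "x \<in> subtrees GInit"
    and "card (GS_at GS x) \<ge> 2"
  shows "\<exists>y\<in>subtrees GTR. leaves y = leaves x"
proof -
  define A where "A = leaves x"
  have dI: "distinct (leaf_list GInit)" and lI: "leaves GInit = Gamma" using assms(1) by (auto simp: tree_for_def)
  have dT: "distinct (leaf_list GTR)" and lT: "leaves GTR = Gamma" using assms(4) by (auto simp: tree_for_def)
  have GSsub: "GS \<subseteq> subtrees GInit" and sep: "\<forall>g1\<in>GS. \<forall>g2\<in>GS. g1 \<noteq> g2 \<longrightarrow> g2 \<notin> subtrees g1"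
    using assms(2) by (auto simp: separated_subtrees_def)
  obtain h1 h2 where h: "h1 \<in> GS_at GS x" "h2 \<in> GS_at GS x" "h1 \<noteq> h2"
    using card2_obtain[OF assms(8)] by blast
  have GSat: "g \<in> GS_at GS x \<Longrightarrow> g \<in> GS \<and> leaves g \<subseteq> A" for g
    using subtrees_leaves by (auto simp: GS_at_def A_def)
  have cover: "\<exists>g\<in>GS_at GS x. a \<in> leaves g" if a: "a \<in> A" for a
  proof -
    have "a \<in> Gamma" using a subtrees_leaves[OF assms(7)] lI A_def by auto
    then obtain g where g: "g \<in> GS" "a \<in> leaves g" using assms(3) by auto
    have "g \<in> subtrees x \<or> x \<in> subtrees g"
      using comparable[OF dI _ assms(7)] GSsub g a A_def by blast
    moreover have "\<not> x \<in> subtrees g \<or> g \<in> subtrees x"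
    proof (rule ccontr)
      assume c: "\<not> (\<not> x \<in> subtrees g \<or> g \<in> subtrees x)"
      then have xg: "x \<in> subtrees g" "g \<notin> subtrees x" by auto
      obtain hh where "hh \<in> GS_at GS x" "hh \<noteq> g" using h by blast
      then have "hh \<in> GS" "hh \<in> subtrees g" using xg subtrees_trans by (auto simp: GS_at_def)
      then show False using sep g \<open>hh \<noteq> g\<close> by metis
    qed
    ultimately have "g \<in> subtrees x" by blast
    then show ?thesis using g by (auto simp: GS_at_def)
  qed
  have core: False if y1: "y1 \<in> subtrees GTR" and d: "d \<in> leaves y1" "d \<notin> A"
     and a1: "a1 \<in> A" "a1 \<in> leaves y1" and b: "b \<in> A" "b \<notin> leaves y1" for y1 d a1 b
  proof -
    have "d \<in> Gamma" using subtrees_leaves[OF y1] d lT by auto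
    then obtain g3 where g3: "g3 \<in> GS" "d \<in> leaves g3" using assms(3) by auto
    have g3n: "g3 \<notin> GS_at GS x" using GSat g3 d by blast
    obtain p q gp gq where pq: "p \<in> A" "p \<in> leaves y1" "q \<in> A" "q \<notin> leaves y1"
      "gp \<in> GS_at GS x" "gq \<in> GS_at GS x" "gp \<noteq> gq" "p \<in> leaves gp" "q \<in> leaves gq"
    proof -
      obtain g1 where g1: "g1 \<in> GS_at GS x" "a1 \<in> leaves g1" using cover a1 by blast
      obtain gb where gb: "gb \<in> GS_at GS x" "b \<in> leaves gb" using cover b by blast
      show ?thesis
      proof (cases "g1 = gb")
        case False then show ?thesis using that a1 b g1 gb by blast
      next
        case True
        obtain hh where hh: "hh \<in> GS_at GS x" "hh \<noteq> g1" using h by blast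
        obtain c where c: "c \<in> leaves hh" using leaves_nonempty[of hh] by blast
        have cA: "c \<in> A" using GSat hh c by blast
        show ?thesis
        proof (cases "c \<in> leaves y1")
          case True then show ?thesis using that[of c b hh gb] hh c cA b gb \<open>g1 = gb\<close> by blast
        next
          case False then show ?thesis using that[of a1 c g1 hh] hh c cA a1 g1 by blast
        qed
      qed
    qed
    have gpq: "gp \<in> GS" "gq \<in> GS" using GSat pq by auto
    have "gp \<noteq> g3" "gq \<noteq> g3" using g3n pq by auto
    then obtain t1 t2 where t: "restrict GInit {p,q,d} = Some t1" "restrict GTR {p,q,d} = Some t2" "tree_iso t1 t2"
      using assms(6) gpq g3 pq unfolding triplet_respecting_def by blast
    show False
      using triplet_contra[OF dT t(1) t(2) t(3) assms(7) _ _ _ y1] pq d A_def by blast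
  qed
  have AT: "A \<subseteq> leaves GTR" using subtrees_leaves[OF assms(7)] lI lT A_def by auto
  obtain y where y: "y \<in> subtrees GTR" "A \<subseteq> leaves y"
     "\<forall>y1 y2. y = Node y1 y2 \<longrightarrow> \<not> A \<subseteq> leaves y1 \<and> \<not> A \<subseteq> leaves y2"
    using lca_exists[OF AT] by blast
  have "leaves y = A"
  proof (rule ccontr)
    assume ne: "leaves y \<noteq> A"
    then obtain d where d: "d \<in> leaves y" "d \<notin> A" using y(2) by blast
    show False
    proof (cases y)
      case (Leaf z)
      then show False using ne y(2) leaves_nonempty[of x] A_def by auto
    next
      case (Node y1 y2)
      have n1: "\<not> A \<subseteq> leaves y1" and n2: "\<not> A \<subseteq> leaves y2" using y(3) Node by auto
      have s1: "y1 \<in> subtrees GTR" "y2 \<in> subtrees GTR"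
        using y(1) Node subtrees_trans[OF y(1)] by auto
      have Ay: "A \<subseteq> leaves y1 \<union> leaves y2" using y(2) Node by auto
      obtain a1 where a1: "a1 \<in> A" "a1 \<in> leaves y1" using n2 Ay by blast
      obtain a2 where a2: "a2 \<in> A" "a2 \<in> leaves y2" using n1 Ay by blast
      obtain b1 where b1: "b1 \<in> A" "b1 \<notin> leaves y1" using n1 by blast
      obtain b2 where b2: "b2 \<in> A" "b2 \<notin> leaves y2" using n2 by blast
      have "d \<in> leaves y1 \<or> d \<in> leaves y2" using d Node by auto
      then show False
        using core[OF s1(1) _ d(2) a1 b1] core[OF s1(2) _ d(2) a2 b2] by blast
    qed
  qed
  then show ?thesis using y(1) A_def by blast
qed

end
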